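(* For every $w\in[0,1]$ (with $0\log 0=0$), $$g(w)=1-\sum_{n\ge1}\frac{(n-1)^{n-1}}{n!}\bigl(-w\log w\bigr)^n$$ and $$\log g(w)=\sum_{n\ge1}\frac{(-n)^{n-1}}{n!}\bigl(w\log w\bigr)^n=W_0(w\log w),$$ the series converging absolutely; here $0^0=1$. In particular $g(w)=f(w)$ for $0\le w\le 1/e$ and $g(w)=w$ (so $W_0(w\log w)=\log w$) for $1/e\le w\le1$.
   Context: Let $\phi(x)=-x\log x$ on $[0,1]$ (with $\phi(0)=0$); it is strictly increasing on $[0,1/e]$ and strictly decreasing on $[1/e,1]$. Let $l,r$ be its restrictions to $[0,1/e]$ and $[1/e,1]$. Define $f(x)=r^{-1}(\phi(x))$ for $0\le x\le 1/e$, $f(x)=l^{-1}(\phi(x))$ for $1/e\le x\le1$, and $g(x)=r^{-1}(\phi(x))$ for $0\le x\le1$. $W_0$ denotes the principal branch of the Lambert $W$ function (the inverse of $u\mapsto ue^u$ on $[-1,\infty)$), defined on $[-1/e,\infty)$. *)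

theory Defs
  imports Complex_Main
begin

text \<open>phi(x) = -x log x on [0,1]; note 0 * ln 0 = 0 in HOL, so phi 0 = 0.\<close>
definition phi :: "real \<Rightarrow> real" where
  "phi x = - x * ln x"

definition l_inv :: "real \<Rightarrow> real" where
  "l_inv y = (THE x. x \<in> {0..exp (-1)} \<and> phi x = y)"

definition r_inv :: "real \<Rightarrow> real" where
  "r_inv y = (THE x. x \<in> {exp (-1)..1} \<and> phi x = y)"

definition f :: "real \<Rightarrow> real" where
  "f x = (if x \<le> exp (-1) then r_inv (phi x) else l_inv (phi x))"

definition g :: "real \<Rightarrow> real" where
  "g x = r_inv (phi x)"

definition W0 :: "real \<Rightarrow> real" where
  "W0 y = (THE u. u \<ge> -1 \<and> u * exp u = y)"

end

theory Submission imports Defs "HOL-Analysis.Analysis" begin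

lemma fin_diff:
  "j < N \<Longrightarrow> (\<Sum>k\<le>N. (-1)^k * real (N choose k) * real k ^ j) = 0"
proof (induction N arbitrary: j)
  case 0 then show ?case by simp
next
  case (Suc M)
  show ?case
  proof (cases j)
    case 0 then show ?thesis using choose_alternating_sum[of "Suc M", where 'a=real] by simp
  next
    case (Suc i)
    have iM: "i < M" using Suc.prems Suc by simp
    have "(\<Sum>k\<le>Suc M. (-1)^k * real (Suc M choose k) * real k ^ j)
        = (\<Sum>m\<le>M. (-1)^(Suc m) * real (Suc M choose Suc m) * real (Suc m) ^ Suc i)"
      by (subst sum.atMost_Suc_shift) (simp add: Suc)
    also have "\<dots> = (\<Sum>m\<le>M. - real (Suc M) * ((-1)^m * real (M choose m) * real (Suc m) ^ i))"
    proof (rule sum.cong[OF refl])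
      fix m
      have e: "real (Suc m) * real (Suc M choose Suc m) = real (Suc M) * real (M choose m)"
        using Suc_times_binomial[of m M] by (metis of_nat_mult)
      show "(-1)^(Suc m) * real (Suc M choose Suc m) * real (Suc m) ^ Suc i
          = - real (Suc M) * ((-1)^m * real (M choose m) * real (Suc m) ^ i)"
      proof -
        have "(-1)^(Suc m) * real (Suc M choose Suc m) * real (Suc m) ^ Suc i
           = - ((-1)^m * (real (Suc m) * real (Suc M choose Suc m)) * real (Suc m) ^ i)"
          by (simp add: ac_simps)
        also have "\<dots> = - ((-1)^m * (real (Suc M) * real (M choose m)) * real (Suc m) ^ i)"
          by (simp only: e)
        finally show ?thesis by (simp del: binomial_Suc_Suc of_nat_Suc add: ac_simps)
      qed
    qed
    also have "\<dots> = - real (Suc M) * (\<Sum>m\<le>M. (-1)^m * real (M choose m) * real (Suc m) ^ i)"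
      by (simp add: sum_distrib_left)
    also have "(\<Sum>m\<le>M. (-1)^m * real (M choose m) * real (Suc m) ^ i)
        = (\<Sum>m\<le>M. \<Sum>l\<le>i. real (i choose l) * ((-1)^m * real (M choose m) * real m ^ l))"
    proof (rule sum.cong[OF refl])
      fix m
      have "real (Suc m) ^ i = (\<Sum>l\<le>i. real (i choose l) * real m ^ l * 1 ^ (i - l))"
        using binomial_ring[of "real m" 1 i] by (simp add: add.commute)
      then show "(-1)^m * real (M choose m) * real (Suc m) ^ i
          = (\<Sum>l\<le>i. real (i choose l) * ((-1)^m * real (M choose m) * real m ^ l))"
        by (simp add: sum_distrib_left algebra_simps)
    qed
    also have "\<dots> = (\<Sum>l\<le>i. real (i choose l) * (\<Sum>m\<le>M. (-1)^m * real (M choose m) * real m ^ l))"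
      by (subst sum.swap) (simp add: sum_distrib_left)
    also have "\<dots> = 0"
      using Suc.IH iM by (intro sum.neutral) auto
    finally show ?thesis by simp
  qed
qed


lemma abel1:
  "(\<Sum>k=1..N. real (N choose k) * real k ^ (k-1) * (y + real N - real k) ^ (N-k))
    = real N * (y + real N) ^ (N-1)"
proof (induction N arbitrary: y)
  case 0 then show ?case by simp
next
  case (Suc M)
  show ?case
  proof (cases M)
    case 0 then show ?thesis by simp
  next
    case (Suc M')
    define N where "N = Suc M"
    define F where "F y = (\<Sum>k=1..N. real (N choose k) * real k ^ (k-1) * (y + real N - real k) ^ (N-k))
      - real N * (y + real N) ^ (N-1)" for y
    have D: "DERIV F y :> 0" for y
    proof -
      have d: "DERIV F y :> (\<Sum>k=1..N. real (N choose k) * real k ^ (k-1) * (real (N-k) * (y + real N - real k) ^ (N-k-1)))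
           - real N * (real (N-1) * (y + real N) ^ (N-1-1))"
        unfolding F_def by (auto intro!: derivative_eq_intros sum.cong simp: ac_simps)
      moreover have s1: "(\<Sum>k=1..N. real (N choose k) * real k ^ (k-1) * (real (N-k) * (y + real N - real k) ^ (N-k-1)))
          = real N * (\<Sum>k=1..M. real (M choose k) * real k ^ (k-1) * ((y+1) + real M - real k) ^ (M-k))"
      proof -
        have "(\<Sum>k=1..N. real (N choose k) * real k ^ (k-1) * (real (N-k) * (y + real N - real k) ^ (N-k-1)))
            = (\<Sum>k=1..M. real (N choose k) * real k ^ (k-1) * (real (N-k) * (y + real N - real k) ^ (N-k-1)))"
          unfolding N_def by (simp add: sum.cl_ivl_Suc)
        also have "\<dots> = (\<Sum>k=1..M. real N * (real (M choose k) * real k ^ (k-1) * ((y+1) + real M - real k) ^ (M-k)))"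
        proof (rule sum.cong[OF refl])
          fix k assume k: "k \<in> {1..M}"
          have b: "real (N - k) * real (N choose k) = real N * real (M choose k)"
            using binomial_absorb_comp[of N k] unfolding N_def by (metis diff_Suc_1 of_nat_mult)
          have e1: "N - k - 1 = M - k" unfolding N_def by simp
          have e2: "y + real N - real k = (y+1) + real M - real k" unfolding N_def by simp
          show "real (N choose k) * real k ^ (k-1) * (real (N-k) * (y + real N - real k) ^ (N-k-1))
             = real N * (real (M choose k) * real k ^ (k-1) * ((y+1) + real M - real k) ^ (M-k))"
            unfolding e1 e2 using b by (simp add: algebra_simps)
        qed
        finally show ?thesis by (simp add: sum_distrib_left)
      qed
      moreover have s2: "real N * (real (N-1) * (y + real N) ^ (N-1-1)) = real N * (real M * ((y+1) + real M) ^ (M-1))"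
        unfolding N_def by (simp add: algebra_simps)
      ultimately show ?thesis by (simp only: s1 s2 Suc.IH[of "y+1"]) simp
    qed
    have "F y = F (- real N)" using DERIV_isconst_all[of F] D by blast
    also have "F (- real N) = 0"
    proof -
      have z: "real N * (- real N + real N) ^ (N-1) = 0" unfolding N_def Suc by simp
      have "(\<Sum>k=1..N. real (N choose k) * real k ^ (k-1) * (- real N + real N - real k) ^ (N-k))
          = (\<Sum>k=1..N. (-1)^N * ((-1)^k * real (N choose k) * real k ^ (N-1)))"
      proof (rule sum.cong[OF refl])
        fix k assume k: "k \<in> {1..N}"
        have "real k ^ (k-1) * (- real N + real N - real k) ^ (N-k) = (-1)^(N-k) * real k ^ (N-1)"
        proof -
          have "real k ^ (k-1) * (- real N + real N - real k) ^ (N-k) = (-1)^(N-k) * (real k ^ (k-1) * real k ^ (N-k))"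
            by (simp add: power_minus')
          also have "real k ^ (k-1) * real k ^ (N-k) = real k ^ (N-1)"
            using k by (simp flip: power_add)
          finally show ?thesis .
        qed
        moreover have "(-1::real)^(N-k) = (-1)^N * (-1)^k"
        proof -
          have "(-1::real)^N = (-1)^(N-k) * (-1)^k" using k by (simp flip: power_add)
          then show ?thesis by (simp add: algebra_simps power_mult_distrib)
        qed
        ultimately show "real (N choose k) * real k ^ (k-1) * (- real N + real N - real k) ^ (N-k)
            = (-1)^N * ((-1)^k * real (N choose k) * real k ^ (N-1))"
          by (simp add: algebra_simps)
      qed
      also have "\<dots> = (-1)^N * (\<Sum>k\<le>N. (-1)^k * real (N choose k) * real k ^ (N-1))"
      proof -
        have "(\<Sum>k\<le>N. (-1)^k * real (N choose k) * real k ^ (N-1)) = (\<Sum>k=1..N. (-1)^k * real (N choose k) * real k ^ (N-1))"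
        proof -
          have "{..N} = insert 0 {1..N}" by auto
          then show ?thesis unfolding N_def Suc by simp
        qed
        then show ?thesis by (simp add: sum_distrib_left)
      qed
      also have "\<dots> = 0" using fin_diff[of "N-1" N] unfolding N_def by simp
      finally show ?thesis unfolding F_def using z by simp
    qed
    finally show ?thesis unfolding F_def N_def by simp
  qed
qed


definition pc :: "nat \<Rightarrow> real" where "pc n = real (Suc n) ^ n / fact (Suc n)"
definition cT :: "nat \<Rightarrow> real" where "cT n = (if n = 0 then 0 else real n ^ (n-1) / fact n)"
definition dc :: "nat \<Rightarrow> real" where "dc n = real (Suc n) ^ n / fact n"

lemma diffs_cT: "diffs cT = dc"
proof
  fix n
  have "diffs cT n = real (Suc n) * (real (Suc n) ^ n / (real (Suc n) * fact n))"
    by (simp add: diffs_def cT_def del: of_nat_Suc)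
  also have "\<dots> = real (Suc n) ^ n / fact n"
    by (metis mult_divide_mult_cancel_left_if times_divide_eq_right of_nat_Suc nat.distinct(1) of_nat_eq_0_iff)
  finally show "diffs cT n = dc n" by (simp add: dc_def)
qed

lemma coeff_id: "dc N - (\<Sum>i\<le>N. cT i * dc (N-i)) = pc N"
proof (cases N)
  case 0 then show ?thesis by (simp add: dc_def cT_def pc_def)
next
  case (Suc M)
  have "(\<Sum>i\<le>N. cT i * dc (N-i)) = (\<Sum>i=1..N. cT i * dc (N-i))"
  proof -
    have "{..N} = insert 0 {1..N}" by auto
    then show ?thesis by (simp add: cT_def)
  qed
  also have "\<dots> = (\<Sum>i=1..N. real (N choose i) * real i ^ (i-1) * (1 + real N - real i) ^ (N-i) / fact N)"
  proof (rule sum.cong[OF refl])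
    fix i assume i: "i \<in> {1..N}"
    have b: "real (N choose i) = fact N / (fact i * fact (N - i))" using i by (simp add: binomial_fact)
    have s: "real (Suc (N - i)) = 1 + real N - real i" using i by auto
    show "cT i * dc (N-i) = real (N choose i) * real i ^ (i-1) * (1 + real N - real i) ^ (N-i) / fact N"
      using i unfolding cT_def dc_def b s by (simp add: field_simps)
  qed
  also have "\<dots> = real N * (1 + real N) ^ (N-1) / fact N"
    using abel1[of N 1] by (simp add: sum_divide_distrib[symmetric] add.commute)
  finally have e: "(\<Sum>i\<le>N. cT i * dc (N-i)) = real N * (1 + real N) ^ (N-1) / fact N" .
  have p: "(1 + real N) ^ N = (1 + real N) * (1 + real N) ^ (N-1)" using Suc by (simp)
  have dN: "dc N = (1 + real N) ^ N / fact N" by (simp add: dc_def)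
  have pN: "pc N = (1 + real N) ^ (N-1) / fact N"
  proof -
    have "pc N = (1 + real N) ^ N / ((1 + real N) * fact N)" by (simp add: pc_def)
    also have "\<dots> = (1 + real N) ^ (N-1) / fact N" unfolding p by simp
    finally show ?thesis .
  qed
  have "(1 + real N) ^ N - real N * (1 + real N) ^ (N-1) = (1 + real N) ^ (N-1)"
    unfolding p by (simp add: algebra_simps)
  then show ?thesis unfolding e dN pN by (simp add: diff_divide_distrib[symmetric])
qed


lemma pow_fact_le_exp: "0 \<le> x \<Longrightarrow> x ^ n / fact n \<le> exp (x::real)"
proof -
  assume x: "0 \<le> x"
  have s: "(\<lambda>k. x ^ k / fact k) sums exp x" using exp_converges[of x] by (simp add: divide_inverse_commute)
  have "(\<Sum>k\<in>{n}. x ^ k / fact k) \<le> (\<Sum>k. x ^ k / fact k)"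
    by (rule sum_le_suminf) (use s x in \<open>auto simp: sums_iff\<close>)
  then show ?thesis using s by (simp add: sums_iff)
qed

lemma cT_nonneg: "0 \<le> cT n" by (simp add: cT_def)
lemma pc_nonneg: "0 \<le> pc n" by (simp add: pc_def)
lemma dc_nonneg: "0 \<le> dc n" by (simp add: dc_def)

lemma cT_le: "cT n \<le> exp (real n + 1)"
proof (cases n)
  case 0 then show ?thesis by (simp add: cT_def)
next
  case (Suc m)
  have "real n ^ (n-1) \<le> real n ^ n" using Suc by (intro power_increasing) auto
  have nz: "n \<noteq> 0" using Suc by simp
  have "cT n = real n ^ (n-1) / fact n" using nz by (simp add: cT_def)
  also have "\<dots> \<le> real n ^ n / fact n" by (rule divide_right_mono) (use \<open>real n ^ (n-1) \<le> real n ^ n\<close> in auto)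
  finally have "cT n \<le> real n ^ n / fact n" .
  also have "\<dots> \<le> exp (real n)" by (rule pow_fact_le_exp) simp
  also have "\<dots> \<le> exp (real n + 1)" by simp
  finally show ?thesis .
qed

lemma pc_le: "pc n \<le> exp (real n + 1)"
proof -
  have "real (Suc n) ^ n \<le> real (Suc n) ^ Suc n" by (intro power_increasing) auto
  then have "pc n \<le> real (Suc n) ^ Suc n / fact (Suc n)" unfolding pc_def by (intro divide_right_mono) auto
  also have "\<dots> \<le> exp (real (Suc n))" by (rule pow_fact_le_exp) simp
  finally show ?thesis by (simp add: ac_simps)
qed

abbreviation "R \<equiv> exp (-1::real)"

lemma summable_small:
  fixes c :: "nat \<Rightarrow> real"
  assumes c: "\<And>n. \<bar>c n\<bar> \<le> exp (real n + 1)" and z: "\<bar>z\<bar> < R"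
  shows "summable (\<lambda>n. c n * z ^ n)"
proof (rule summable_comparison_test[where g = "\<lambda>n. exp 1 * (exp 1 * \<bar>z\<bar>) ^ n"])
  have "exp 1 * \<bar>z\<bar> < exp 1 * R" using z by simp
  also have "exp 1 * R = 1" by (simp flip: exp_add)
  finally have "\<bar>exp 1 * \<bar>z\<bar>\<bar> < 1" by simp
  then show "summable (\<lambda>n. exp 1 * (exp 1 * \<bar>z\<bar>) ^ n)" by (intro summable_mult summable_geometric) simp
  show "\<exists>N. \<forall>n\<ge>N. norm (c n * z ^ n) \<le> exp 1 * (exp 1 * \<bar>z\<bar>) ^ n"
  proof (intro exI allI impI)
    fix n
    have "norm (c n * z ^ n) = \<bar>c n\<bar> * \<bar>z\<bar> ^ n" by (simp add: abs_mult power_abs)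
    also have "\<dots> \<le> exp (real n + 1) * \<bar>z\<bar> ^ n" using c by (intro mult_right_mono) auto
    also have "\<dots> = exp 1 * (exp 1 * \<bar>z\<bar>) ^ n"
      by (simp add: power_mult_distrib exp_add exp_of_nat_mult[symmetric] mult_ac)
    finally show "norm (c n * z ^ n) \<le> exp 1 * (exp 1 * \<bar>z\<bar>) ^ n" .
  qed
qed

lemma sT: "\<bar>z\<bar> < R \<Longrightarrow> summable (\<lambda>n. cT n * z ^ n)"
  by (rule summable_small) (use cT_le cT_nonneg in auto)
lemma sP: "\<bar>z\<bar> < R \<Longrightarrow> summable (\<lambda>n. pc n * z ^ n)"
  by (rule summable_small) (use pc_le pc_nonneg in auto)
lemma sD: "\<bar>z\<bar> < R \<Longrightarrow> summable (\<lambda>n. dc n * z ^ n)"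
  using termdiff_converges[of z R cT] sT unfolding diffs_cT by auto
lemma sP': "\<bar>z\<bar> < R \<Longrightarrow> summable (\<lambda>n. diffs pc n * z ^ n)"
  using termdiff_converges[of z R pc] sP by auto

definition T :: "real \<Rightarrow> real" where "T z = (\<Sum>n. cT n * z ^ n)"
definition T' :: "real \<Rightarrow> real" where "T' z = (\<Sum>n. dc n * z ^ n)"
definition P :: "real \<Rightarrow> real" where "P z = (\<Sum>n. pc n * z ^ n)"
definition P' :: "real \<Rightarrow> real" where "P' z = (\<Sum>n. diffs pc n * z ^ n)"

lemma dT: "\<bar>z\<bar> < R \<Longrightarrow> DERIV T z :> T' z"
  unfolding T_def T'_def using termdiffs_strong'[of R cT z] sT unfolding diffs_cT by auto
lemma dP: "\<bar>z\<bar> < R \<Longrightarrow> DERIV P z :> P' z"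
  unfolding P_def P'_def using termdiffs_strong'[of R pc z] sP by auto

lemma T_eq: "\<bar>z\<bar> < R \<Longrightarrow> T z = z * P z"
proof -
  assume z: "\<bar>z\<bar> < R"
  have "T z = cT 0 + (\<Sum>n. cT (Suc n) * z ^ n) * z" unfolding T_def by (rule powser_split_head(1)[OF sT[OF z]])
  also have e: "(\<lambda>n. cT (Suc n) * z ^ n) = (\<lambda>n. pc n * z ^ n)" by (rule ext) (simp add: cT_def pc_def)
  have "cT 0 + (\<Sum>n. cT (Suc n) * z ^ n) * z = (\<Sum>n. pc n * z ^ n) * z" unfolding e by (simp add: cT_def)
  finally show ?thesis by (simp add: P_def mult.commute)
qed

lemma ode: "\<bar>z\<bar> < R \<Longrightarrow> T' z * (1 - T z) = P z"
proof -
  assume z: "\<bar>z\<bar> < R"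
  have az: "\<bar>z\<bar> < R" using z by simp
  have n1: "summable (\<lambda>k. norm (cT k * z ^ k))"
  proof -
    have "norm (cT k * z ^ k) = cT k * \<bar>z\<bar> ^ k" for k using cT_nonneg[of k] by (simp add: abs_mult power_abs)
    then show ?thesis using sT[of "\<bar>z\<bar>"] az by simp
  qed
  have n2: "summable (\<lambda>k. norm (dc k * z ^ k))"
  proof -
    have "norm (dc k * z ^ k) = dc k * \<bar>z\<bar> ^ k" for k using dc_nonneg[of k] by (simp add: abs_mult power_abs)
    then show ?thesis using sD[of "\<bar>z\<bar>"] az by simp
  qed
  have cp: "(\<lambda>k. \<Sum>i\<le>k. cT i * z ^ i * (dc (k-i) * z ^ (k-i))) sums (T z * T' z)"
    unfolding T_def T'_def by (rule Cauchy_product_sums[OF n1 n2])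
  have "(\<Sum>i\<le>k. cT i * z ^ i * (dc (k-i) * z ^ (k-i))) = (\<Sum>i\<le>k. cT i * dc (k-i)) * z ^ k" for k
  proof -
    have key: "cT i * z ^ i * (dc (k-i) * z ^ (k-i)) = cT i * dc (k-i) * z ^ k" if "i \<in> {..k}" for i
    proof -
      have "z ^ i * z ^ (k-i) = z ^ k" using that by (simp flip: power_add)
      then show ?thesis by (metis mult.assoc mult.left_commute)
    qed
    show ?thesis unfolding sum_distrib_right by (rule sum.cong[OF refl key])
  qed
  with cp have cp2: "(\<lambda>k. (\<Sum>i\<le>k. cT i * dc (k-i)) * z ^ k) sums (T z * T' z)" by simp
  have "(\<lambda>k. dc k * z ^ k - (\<Sum>i\<le>k. cT i * dc (k-i)) * z ^ k) sums (T' z - T z * T' z)"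
    using sums_diff[OF summable_sums[OF sD[OF z]] cp2] unfolding T'_def .
  moreover have "dc k * z ^ k - (\<Sum>i\<le>k. cT i * dc (k-i)) * z ^ k = pc k * z ^ k" for k
    using coeff_id[of k] by (simp add: left_diff_distrib[symmetric])
  ultimately have "(\<lambda>k. pc k * z ^ k) sums (T' z - T z * T' z)" by simp
  then have "P z = T' z - T z * T' z" unfolding P_def by (rule sums_unique[symmetric])
  then show ?thesis by (simp add: algebra_simps)
qed


lemma R_pos: "0 < R" by simp

lemma P_deriv_rel: "0 < t \<Longrightarrow> t < R \<Longrightarrow> P' t = P t * T' t"
proof -
  assume t: "0 < t" "t < R"
  have at: "\<bar>t\<bar> < R" using t by simp
  have d1: "DERIV (\<lambda>s. s * P s) t :> (1 * P t + t * P' t)"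
    using DERIV_mult[OF DERIV_ident dP[OF at]] by (simp add: mult.commute)
  have d2: "DERIV (\<lambda>s. s * P s) t :> T' t"
    by (rule has_field_derivative_transform_within_open[OF dT[OF at], of "ball 0 R"])
       (use at T_eq in \<open>auto simp: dist_real_def\<close>)
  have h1: "T' t = P t + t * P' t" using DERIV_unique[OF d2 d1] by simp
  have h2: "T' t * (1 - t * P t) = P t" using ode[OF at] T_eq[OF at] by simp
  have "t * (P' t - P t * T' t) = T' t * (1 - t * P t) - P t"
    using h1 by (simp add: algebra_simps)
  also have "\<dots> = 0" using h2 by simp
  finally show ?thesis using t by simp
qed

lemma P0: "P 0 = 1"
proof -
  have "P 0 = pc 0" unfolding P_def by (rule powser_zero)
  then show ?thesis by (simp add: pc_def)
qed
lemma T0: "T 0 = 0" by (simp add: T_def cT_def)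

lemma PexpT: "0 \<le> t \<Longrightarrow> t < R \<Longrightarrow> P t * exp (- T t) = 1"
proof -
  assume t: "0 \<le> t" "t < R"
  define v where "v s = P s * exp (- T s)" for s
  show ?thesis
  proof (cases "t = 0")
    case True then show ?thesis by (simp add: P0 T0)
  next
    case False
    then have t0: "0 < t" using t by simp
    have dv: "DERIV v s :> P' s * exp (- T s) + P s * (exp (- T s) * (- T' s))" if "\<bar>s\<bar> < R" for s
      unfolding v_def using dP[OF that] dT[OF that] by (auto intro!: derivative_eq_intros)
    have "v t = v 0"
    proof (rule DERIV_isconst_end[OF t0])
      show "continuous_on {0..t} v"
      proof (rule continuous_at_imp_continuous_on, rule ballI)
        fix x assume "x \<in> {0..t}"
        then have "\<bar>x\<bar> < R" using t by auto
        then show "isCont v x" using dv DERIV_isCont by blast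
      qed
      fix s assume s: "0 < s" "s < t"
      then have "\<bar>s\<bar> < R" using t by simp
      moreover have "P' s * exp (- T s) + P s * (exp (- T s) * (- T' s)) = 0"
        using P_deriv_rel[of s] s t by (simp add: algebra_simps)
      ultimately show "DERIV v s :> 0" using dv by metis
    qed
    then show ?thesis by (simp add: v_def P0 T0)
  qed
qed

lemma T_fix: "0 \<le> t \<Longrightarrow> t < R \<Longrightarrow> T t * exp (- T t) = t"
  using PexpT[of t] T_eq[of t] by simp

lemma T_nonneg: "0 \<le> t \<Longrightarrow> t < R \<Longrightarrow> 0 \<le> T t"
  unfolding T_def using sT[of t] cT_nonneg by (intro suminf_nonneg) auto

lemma T_cont: "0 \<le> t \<Longrightarrow> t < R \<Longrightarrow> continuous_on {0..t} T"
  by (rule continuous_at_imp_continuous_on) (metis DERIV_isCont dT abs_of_nonneg atLeastAtMost_iff order.strict_trans1)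

lemma T_lt1: "0 \<le> t \<Longrightarrow> t < R \<Longrightarrow> T t < 1"
proof (rule ccontr)
  assume t: "0 \<le> t" "t < R" and n: "\<not> T t < 1"
  obtain s where s: "0 \<le> s" "s \<le> t" "T s = 1"
    using IVT'[of T 0 1 t] T0 n t T_cont[OF t] by auto
  have "T s * exp (- T s) = s" using T_fix[of s] s t by simp
  then have "s = R" using s by simp
  then show False using s t by simp
qed

lemma sT_R: "summable (\<lambda>n. cT n * R ^ n)"
proof (rule summableI_nonneg_bounded[where x = 1])
  show "0 \<le> cT n * R ^ n" for n using cT_nonneg by simp
  fix N
  define \<phi> where "\<phi> s = (\<Sum>n<N. cT n * s ^ n)" for s
  have c: "isCont \<phi> R" unfolding \<phi>_def by (intro continuous_intros)
  have l: "(\<phi> \<longlongrightarrow> \<phi> R) (at_left R)" using c unfolding isCont_def by (rule Lim_at_imp_Lim_at_within)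
  have ev: "eventually (\<lambda>s. \<phi> s \<le> 1) (at_left R)"
    using eventually_at_left_real[OF R_pos]
  proof eventually_elim
    case (elim s)
    then have s: "0 < s" "s < R" by auto
    have "\<phi> s \<le> T s" unfolding \<phi>_def T_def
      by (rule sum_le_suminf) (use sT[of s] s cT_nonneg in auto)
    also have "\<dots> < 1" using T_lt1 s by simp
    finally show ?case by simp
  qed
  show "(\<Sum>i<N. cT i * R ^ i) \<le> 1"
    using tendsto_le[OF trivial_limit_at_left_real tendsto_const l ev] unfolding \<phi>_def by simp
qed

lemma powser_cont_R:
  fixes c :: "nat \<Rightarrow> real"
  assumes c: "\<And>n. 0 \<le> c n" and s: "summable (\<lambda>n. c n * R ^ n)"
  shows "continuous_on {0..R} (\<lambda>t. \<Sum>n. c n * t ^ n)"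
proof (rule uniform_limit_theorem)
  show "uniform_limit {0..R} (\<lambda>N t. \<Sum>n<N. c n * t ^ n) (\<lambda>t. \<Sum>n. c n * t ^ n) sequentially"
  proof (rule Weierstrass_m_test[OF _ s])
    fix n and t :: real assume t: "t \<in> {0..R}"
    have "norm (c n * t ^ n) = c n * t ^ n" using c t by simp
    also have "\<dots> \<le> c n * R ^ n" using c t by (intro mult_left_mono power_mono) auto
    finally show "norm (c n * t ^ n) \<le> c n * R ^ n" .
  qed
qed (auto intro!: always_eventually continuous_intros)

lemma closure_le:
  fixes F :: "real \<Rightarrow> real"
  assumes "continuous_on {0..R} F" and "\<And>s. 0 < s \<Longrightarrow> s < R \<Longrightarrow> F s \<le> 0"
  shows "F R \<le> 0"
proof -
  have "(F \<longlongrightarrow> F R) (at R within {0..R})" using assms(1) unfolding continuous_on_def by simp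
  then have l: "(F \<longlongrightarrow> F R) (at_left R)" by (simp add: at_within_Icc_at_left)
  have ev: "eventually (\<lambda>s. F s \<le> 0) (at_left R)"
    using eventually_at_left_real[OF R_pos] by eventually_elim (use assms(2) in auto)
  show ?thesis using tendsto_le[OF trivial_limit_at_left_real tendsto_const l ev] .
qed

lemma T_contR: "continuous_on {0..R} T"
  unfolding T_def by (rule powser_cont_R[OF cT_nonneg sT_R])

lemma T_props: "0 \<le> t \<Longrightarrow> t \<le> R \<Longrightarrow> 0 \<le> T t \<and> T t \<le> 1 \<and> T t * exp (- T t) = t"
proof -
  assume t: "0 \<le> t" "t \<le> R"
  show ?thesis
  proof (cases "t < R")
    case True then show ?thesis using T_nonneg T_lt1 T_fix t by (auto intro: less_imp_le)
  next
    case False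
    then have tR: "t = R" using t by simp
    have a: "- T R \<le> 0"
      by (rule closure_le) (auto intro!: continuous_intros T_contR T_nonneg)
    have b: "T R - 1 \<le> 0"
      by (rule closure_le) (auto intro!: continuous_intros T_contR less_imp_le[OF T_lt1])
    have c1: "T R * exp (- T R) - R \<le> 0"
      by (rule closure_le) (auto intro!: continuous_intros T_contR simp: T_fix)
    have c2: "- (T R * exp (- T R) - R) \<le> 0"
      by (rule closure_le) (auto intro!: continuous_intros T_contR simp: T_fix)
    show ?thesis using a b c1 c2 tR by auto
  qed
qed


definition cG :: "nat \<Rightarrow> real" where "cG n = (if n = 0 then 0 else real (n-1) ^ (n-1) / fact n)"
definition ec :: "nat \<Rightarrow> real" where "ec n = real n ^ n / fact n"

lemma diffs_cG: "diffs cG = ec"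
proof
  fix n
  have "diffs cG n = real (Suc n) * (real n ^ n / (real (Suc n) * fact n))"
    by (simp add: diffs_def cG_def del: of_nat_Suc)
  also have "\<dots> = real n ^ n / fact n"
    by (metis mult_divide_mult_cancel_left_if times_divide_eq_right of_nat_Suc nat.distinct(1) of_nat_eq_0_iff)
  finally show "diffs cG n = ec n" by (simp add: ec_def)
qed

lemma cG_nonneg: "0 \<le> cG n" by (simp add: cG_def)
lemma cG_le_cT: "cG n \<le> cT n"
proof (cases "n = 0")
  case True then show ?thesis by (simp add: cG_def cT_def)
next
  case False
  have "real (n-1) ^ (n-1) \<le> real n ^ (n-1)" by (intro power_mono) auto
  then show ?thesis using False unfolding cG_def cT_def by (simp add: divide_right_mono)
qed

lemma sG: "\<bar>z\<bar> < R \<Longrightarrow> summable (\<lambda>n. cG n * z ^ n)"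
  by (rule summable_small) (use cG_le_cT cT_le cG_nonneg in \<open>auto intro: order_trans\<close>)
lemma sE: "\<bar>z\<bar> < R \<Longrightarrow> summable (\<lambda>n. ec n * z ^ n)"
  using termdiff_converges[of z R cG] sG unfolding diffs_cG by auto

definition G :: "real \<Rightarrow> real" where "G z = (\<Sum>n. cG n * z ^ n)"
definition E :: "real \<Rightarrow> real" where "E z = (\<Sum>n. ec n * z ^ n)"

lemma dG: "\<bar>z\<bar> < R \<Longrightarrow> DERIV G z :> E z"
  unfolding G_def E_def using termdiffs_strong'[of R cG z] sG unfolding diffs_cG by auto

lemma E_eq: "\<bar>z\<bar> < R \<Longrightarrow> E z = 1 + z * T' z"
proof -
  assume z: "\<bar>z\<bar> < R"
  have "E z = ec 0 + (\<Sum>n. ec (Suc n) * z ^ n) * z" unfolding E_def by (rule powser_split_head(1)[OF sE[OF z]])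
  moreover have e: "(\<lambda>n. ec (Suc n) * z ^ n) = (\<lambda>n. dc n * z ^ n)"
  proof (rule ext)
    fix n
    have "ec (Suc n) = real (Suc n) * real (Suc n) ^ n / (real (Suc n) * fact n)"
      by (simp add: ec_def del: of_nat_Suc)
    also have "\<dots> = dc n" unfolding dc_def
      by (metis mult_divide_mult_cancel_left_if of_nat_Suc nat.distinct(1) of_nat_eq_0_iff)
    finally show "ec (Suc n) * z ^ n = dc n * z ^ n" by simp
  qed
  moreover have "ec 0 = 1" by (simp add: ec_def)
  ultimately show ?thesis by (simp add: T'_def mult.commute)
qed

lemma G_eq: "0 \<le> t \<Longrightarrow> t < R \<Longrightarrow> 1 - G t = exp (- T t)"
proof -
  assume t: "0 \<le> t" "t < R"
  define H where "H s = 1 - G s - exp (- T s)" for s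
  have dH: "DERIV H s :> - E s + exp (- T s) * T' s" if "\<bar>s\<bar> < R" for s
    unfolding H_def using dG[OF that] dT[OF that] by (auto intro!: derivative_eq_intros)
  have zero: "- E s + exp (- T s) * T' s = 0" if "0 \<le> s" "s < R" for s
  proof -
    have as: "\<bar>s\<bar> < R" using that by simp
    have "exp (- T s) * T' s - s * T' s = exp (- T s) * T' s - T s * exp (- T s) * T' s"
      using T_fix[OF that] by simp
    also have "\<dots> = (T' s * (1 - T s)) * exp (- T s)" by (simp add: algebra_simps)
    also have "\<dots> = 1" using ode[OF as] PexpT[OF that] by simp
    finally show ?thesis using E_eq[OF as] by simp
  qed
  have "H t = H 0"
  proof (cases "t = 0")
    case True then show ?thesis by simp
  next
    case False
    then have t0: "0 < t" using t by simp
    show ?thesis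
    proof (rule DERIV_isconst_end[OF t0])
      show "continuous_on {0..t} H"
      proof (rule continuous_at_imp_continuous_on, rule ballI)
        fix x assume "x \<in> {0..t}"
        then have "\<bar>x\<bar> < R" using t by auto
        then show "isCont H x" using dH DERIV_isCont by blast
      qed
      fix s assume s: "0 < s" "s < t"
      then have "\<bar>s\<bar> < R" using t by simp
      then show "DERIV H s :> 0" using dH zero[of s] s t by fastforce
    qed
  qed
  moreover have "G 0 = 0"
  proof -
    have "G 0 = cG 0" unfolding G_def by (rule powser_zero)
    then show ?thesis by (simp add: cG_def)
  qed
  ultimately show ?thesis by (simp add: H_def T0)
qed

lemma sG_R: "summable (\<lambda>n. cG n * R ^ n)"
  by (rule summable_comparison_test'[OF sT_R, of 0]) (use cG_le_cT cG_nonneg in \<open>auto intro: mult_right_mono\<close>)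

lemma G_contR: "continuous_on {0..R} G"
  unfolding G_def by (rule powser_cont_R[OF cG_nonneg sG_R])

lemma sT_le: "0 \<le> t \<Longrightarrow> t \<le> R \<Longrightarrow> summable (\<lambda>n. cT n * t ^ n)"
  by (rule summable_comparison_test'[OF sT_R, of 0]) (simp add: abs_mult power_abs abs_of_nonneg[OF cT_nonneg] mult_left_mono power_mono cT_nonneg)
lemma sG_le: "0 \<le> t \<Longrightarrow> t \<le> R \<Longrightarrow> summable (\<lambda>n. cG n * t ^ n)"
  by (rule summable_comparison_test'[OF sG_R, of 0]) (simp add: abs_mult power_abs abs_of_nonneg[OF cG_nonneg] mult_left_mono power_mono cG_nonneg)

lemma G_props: "0 \<le> t \<Longrightarrow> t \<le> R \<Longrightarrow> 1 - G t = exp (- T t)"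
proof -
  assume t: "0 \<le> t" "t \<le> R"
  show ?thesis
  proof (cases "t < R")
    case True then show ?thesis using G_eq t by simp
  next
    case False
    then have tR: "t = R" using t by simp
    have c1: "(1 - G R - exp (- T R)) \<le> 0"
      by (rule closure_le) (auto intro!: continuous_intros T_contR G_contR simp: G_eq)
    have c2: "- (1 - G R - exp (- T R)) \<le> 0"
      by (rule closure_le) (auto intro!: continuous_intros T_contR G_contR simp: G_eq)
    show ?thesis using c1 c2 tR by auto
  qed
qed


lemma phi_range: "0 \<le> w \<Longrightarrow> w \<le> 1 \<Longrightarrow> 0 \<le> phi w \<and> phi w \<le> R"
proof -
  assume w: "0 \<le> w" "w \<le> 1"
  show ?thesis
  proof (cases "w = 0")
    case True then show ?thesis by (simp add: phi_def)
  next
    case False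
    then have wp: "0 < w" using w by simp
    have l0: "ln w \<le> 0" using wp w by simp
    have "ln (R / w) \<le> R / w - 1" by (rule ln_le_minus_one) (use wp in simp)
    moreover have "ln (R / w) = -1 - ln w" using wp by (simp add: ln_div)
    ultimately have "- ln w \<le> R / w" by simp
    then have "w * (- ln w) \<le> w * (R / w)" using wp by (intro mult_left_mono) auto
    then have "- w * ln w \<le> R" using wp by simp
    moreover have "0 \<le> - w * ln w" using wp l0 by (simp add: mult_nonneg_nonpos)
    ultimately show ?thesis by (simp add: phi_def)
  qed
qed

lemma ueu_mono: "-1 \<le> a \<Longrightarrow> a < b \<Longrightarrow> a * exp a < b * exp (b::real)"
proof -
  assume ab: "-1 \<le> a" "a < b"
  show ?thesis
  proof (rule DERIV_pos_imp_increasing_open[OF ab(2)])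
    fix x assume x: "a < x" "x < b"
    have "DERIV (\<lambda>u. u * exp u) x :> exp x + x * exp x"
      by (auto intro!: derivative_eq_intros)
    moreover have "exp x + x * exp x > 0"
    proof -
      have "exp x + x * exp x = (1 + x) * exp x" by (simp add: algebra_simps)
      moreover have "0 < 1 + x" using x ab by simp
      ultimately show ?thesis by simp
    qed
    ultimately show "\<exists>y. DERIV (\<lambda>u. u * exp u) x :> y \<and> 0 < y" by blast
  qed (intro continuous_intros)
qed

lemma ueu_inj: "-1 \<le> a \<Longrightarrow> -1 \<le> b \<Longrightarrow> a * exp a = b * exp b \<Longrightarrow> a = (b::real)"
  using ueu_mono[of a b] ueu_mono[of b a] by (cases a b rule: linorder_cases) auto

lemma W0_eq: "-1 \<le> u \<Longrightarrow> W0 (u * exp u) = u"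
  unfolding W0_def by (rule the_equality) (auto intro: ueu_inj)

lemma r_inv_eq:
  assumes x: "R \<le> x" "x \<le> 1"
  shows "r_inv (phi x) = x"
  unfolding r_inv_def
proof (rule the_equality)
  show "x \<in> {R..1} \<and> phi x = phi x" using x by simp
  fix y assume y: "y \<in> {R..1} \<and> phi y = phi x"
  have Rp: "0 < R" by simp
  have xp: "0 < x" using Rp x(1) by linarith
  have "R \<le> y" using y by simp
  then have yp: "0 < y" using Rp by linarith
  have lx: "-1 \<le> ln x" using x xp by (metis ln_exp ln_le_cancel_iff Rp)
  have ly: "-1 \<le> ln y" using y yp by (metis atLeastAtMost_iff ln_exp ln_le_cancel_iff Rp)
  have "ln y * exp (ln y) = ln x * exp (ln x)" using y xp yp by (simp add: phi_def mult.commute)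
  then have "ln y = ln x" using ueu_inj ly lx by blast
  then show "y = x" using xp yp by simp
qed

theorem proposition10:
  fixes w :: real
  assumes "0 \<le> w" and "w \<le> 1"
  shows "summable (\<lambda>n. \<bar>real n ^ n / fact (Suc n) * phi w ^ Suc n\<bar>)
    \<and> g w = 1 - (\<Sum>n. real n ^ n / fact (Suc n) * phi w ^ Suc n)
    \<and> summable (\<lambda>n. \<bar>(- real (Suc n)) ^ n / fact (Suc n) * (w * ln w) ^ Suc n\<bar>)
    \<and> g w > 0
    \<and> ln (g w) = (\<Sum>n. (- real (Suc n)) ^ n / fact (Suc n) * (w * ln w) ^ Suc n)
    \<and> ln (g w) = W0 (w * ln w)
    \<and> (w \<le> exp (-1) \<longrightarrow> g w = f w)
    \<and> (exp (-1) \<le> w \<longrightarrow> g w = w \<and> W0 (w * ln w) = ln w)"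
proof -
  define t where "t = phi w"
  have t: "0 \<le> t" "t \<le> R" using phi_range[OF assms] unfolding t_def by auto
  have wl: "w * ln w = - t" unfolding t_def phi_def by simp
  define T0 where "T0 = T t"
  have Tp: "0 \<le> T0" "T0 \<le> 1" "T0 * exp (- T0) = t" using T_props[OF t] unfolding T0_def by auto
  have Gp: "1 - G t = exp (- T0)" using G_props[OF t] unfolding T0_def .
  have x: "R \<le> exp (- T0)" "exp (- T0) \<le> 1" using Tp by auto
  have phx: "phi (exp (- T0)) = t" using Tp(3) by (simp add: phi_def mult.commute)
  have gw: "g w = exp (- T0)" unfolding g_def t_def[symmetric] using r_inv_eq[OF x] phx by simp
  have eG: "(\<lambda>n. real n ^ n / fact (Suc n) * t ^ Suc n) = (\<lambda>n. cG (Suc n) * t ^ Suc n)"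
    by (rule ext) (simp add: cG_def)
  have sG1: "summable (\<lambda>n. cG (Suc n) * t ^ Suc n)"
    using sG_le[OF t] by (subst summable_Suc_iff)
  have sumG: "(\<Sum>n. cG (Suc n) * t ^ Suc n) = G t"
    using suminf_split_head[OF sG_le[OF t]] by (simp add: G_def cG_def)
  have absG: "(\<lambda>n. \<bar>real n ^ n / fact (Suc n) * t ^ Suc n\<bar>) = (\<lambda>n. real n ^ n / fact (Suc n) * t ^ Suc n)"
    using t by (intro ext) simp
  have eT: "(\<lambda>n. (- real (Suc n)) ^ n / fact (Suc n) * (w * ln w) ^ Suc n) = (\<lambda>n. - (cT (Suc n) * t ^ Suc n))"
  proof (rule ext)
    fix n
    have "(- real (Suc n)) ^ n * (- t) ^ Suc n = - (real (Suc n) ^ n * t ^ Suc n)"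
    proof -
      have "(- real (Suc n)) ^ n * (- t) ^ Suc n = ((- real (Suc n)) * (- t)) ^ n * (- t)"
        by (simp only: power_Suc power_mult_distrib ac_simps)
      also have "\<dots> = - ((real (Suc n) * t) ^ n * t)" by (simp only: minus_mult_minus mult_minus_right mult_minus_left minus_minus)
      also have "\<dots> = - (real (Suc n) ^ n * t ^ Suc n)" by (simp add: power_mult_distrib mult_ac)
      finally show ?thesis .
    qed
    then show "(- real (Suc n)) ^ n / fact (Suc n) * (w * ln w) ^ Suc n = - (cT (Suc n) * t ^ Suc n)"
      unfolding wl cT_def by (simp add: field_simps)
  qed
  have sT1: "summable (\<lambda>n. cT (Suc n) * t ^ Suc n)"
    using sT_le[OF t] by (subst summable_Suc_iff)
  have sumT: "(\<Sum>n. cT (Suc n) * t ^ Suc n) = T0"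
    using suminf_split_head[OF sT_le[OF t]] by (simp add: T0_def T_def cT_def)
  have absT: "(\<lambda>n. \<bar>- (cT (Suc n) * t ^ Suc n)\<bar>) = (\<lambda>n. cT (Suc n) * t ^ Suc n)"
    using t cT_nonneg by (intro ext) simp
  have lng: "ln (g w) = - T0" using gw by simp
  have W0v: "W0 (w * ln w) = - T0"
  proof -
    have "w * ln w = (- T0) * exp (- T0)" using wl Tp(3) by simp
    then show ?thesis using W0_eq[of "- T0"] Tp by simp
  qed
  have p1: "summable (\<lambda>n. \<bar>real n ^ n / fact (Suc n) * phi w ^ Suc n\<bar>)"
    unfolding t_def[symmetric] absG eG using sG1 .
  have p2: "g w = 1 - (\<Sum>n. real n ^ n / fact (Suc n) * phi w ^ Suc n)"
    unfolding t_def[symmetric] eG sumG gw Gp ..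
  have p3: "summable (\<lambda>n. \<bar>(- real (Suc n)) ^ n / fact (Suc n) * (w * ln w) ^ Suc n\<bar>)"
  proof -
    have "(\<lambda>n. \<bar>(- real (Suc n)) ^ n / fact (Suc n) * (w * ln w) ^ Suc n\<bar>) = (\<lambda>n. cT (Suc n) * t ^ Suc n)"
    proof (rule ext)
      fix n
      have "\<bar>(- real (Suc n)) ^ n / fact (Suc n) * (w * ln w) ^ Suc n\<bar> = \<bar>- (cT (Suc n) * t ^ Suc n)\<bar>"
        using fun_cong[OF eT, of n] by simp
      also have "\<dots> = cT (Suc n) * t ^ Suc n" using cT_nonneg[of "Suc n"] t by simp
      finally show "\<bar>(- real (Suc n)) ^ n / fact (Suc n) * (w * ln w) ^ Suc n\<bar> = cT (Suc n) * t ^ Suc n" .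
    qed
    then show ?thesis using sT1 by simp
  qed
  have p5: "ln (g w) = (\<Sum>n. (- real (Suc n)) ^ n / fact (Suc n) * (w * ln w) ^ Suc n)"
    unfolding eT lng using suminf_minus[OF sT1] sumT by simp
  have p7: "w \<le> exp (-1) \<longrightarrow> g w = f w" by (simp add: f_def g_def)
  have p8: "exp (-1) \<le> w \<longrightarrow> g w = w \<and> W0 (w * ln w) = ln w"
  proof
    assume "exp (-1) \<le> w"
    then have gw': "g w = w" unfolding g_def using r_inv_eq assms(2) by simp
    then show "g w = w \<and> W0 (w * ln w) = ln w" using lng W0v by simp
  qed
  have p4: "g w > 0" using gw by simp
  have p6: "ln (g w) = W0 (w * ln w)" using lng W0v by simp
  show ?thesis using p1 p2 p3 p4 p5 p6 p7 p8 by blast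
qed

end
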